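(* Let $p\geq 5$ be prime. Then all odd numbers $$2k(n,p)^{+}+1=(2n+1)p+4N(p/6),\quad n=0,1,2,\ldots,$$ $$2k(n,p)^{-}+1=(2n+1)p-4N(p/6),\quad n=1,2,\ldots,$$ are non-ranks. More precisely: (a) If $p\equiv 1\pmod 6$, then $3(2k(n,p)^{+}+1)\mp 2$ is the pair $([3(2n+1)+2]p-4,\,[3(2n+1)+2]p)$, and $3(2k(n,p)^{-}+1)\mp 2$ is the pair $([3(2n+1)-2]p,\,[3(2n+1)-2]p+4)$. (b) If $p\equiv -1\pmod 6$, then $3(2k(n,p)^{+}+1)\mp 2$ is the pair $([3(2n+1)+2]p,\,[3(2n+1)+2]p+4)$, and $3(2k(n,p)^{-}+1)\mp 2$ is the pair $([3(2n+1)-2]p-4,\,[3(2n+1)-2]p)$. Each of these pairs contains a composite number.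
   Context: $N(x)$ denotes the integer nearest to the real number $x$ (for prime $p\geq5$, $N(p/6)=(p-1)/6$ if $p\equiv1\pmod6$ and $(p+1)/6$ if $p\equiv-1\pmod6$). An odd integer $t\geq 3$ is a twin-4 rank if $3t-2$ and $3t+2$ are both prime, and a non-rank otherwise. *)

theory Defs
  imports Complex_Main "HOL-Computational_Algebra.Primes"
begin

text \<open>N(x): the integer nearest to x (ties, which never occur for p/6 with p prime \<ge> 5,
  are rounded up).\<close>
definition nearest_int :: "real \<Rightarrow> int" where
  "nearest_int x = \<lfloor>x + 1/2\<rfloor>"

definition twin4_rank :: "int \<Rightarrow> bool" where
  "twin4_rank t \<longleftrightarrow> odd t \<and> t \<ge> 3 \<and> prime (3*t - 2) \<and> prime (3*t + 2)"

definition non_rank :: "int \<Rightarrow> bool" where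
  "non_rank t \<longleftrightarrow> odd t \<and> t \<ge> 3 \<and> \<not> (prime (3*t - 2) \<and> prime (3*t + 2))"

definition composite :: "int \<Rightarrow> bool" where
  "composite m \<longleftrightarrow> m > 1 \<and> \<not> prime m"

end

theory Submission
  imports Defs
begin

lemma not_prime_prod: fixes a b :: int assumes "a > 1" "b > 1" shows "\<not> prime (a*b)"
proof
  assume "prime (a*b)"
  hence "a = 1 \<or> a = a*b" using assms unfolding prime_int_iff by (meson dvd_triv_left less_imp_le less_trans zero_less_one)
  thus False using assms by auto
qed

lemma comp_prod: fixes a b :: int assumes "a > 1" "b > 1" shows "composite (a*b)"
  using assms not_prime_prod[OF assms] by (simp add: composite_def) (smt (verit) mult_less_cancel_left1)

lemma N1: assumes "p = 6*k+1" shows "nearest_int (real p/6) = int k"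
proof -
  have "real p/6 + 1/2 = real k + 2/3" using assms by (simp add: field_simps)
  thus ?thesis unfolding nearest_int_def by (simp add: floor_eq_iff)
qed

lemma N5: assumes "p = 6*k+5" shows "nearest_int (real p/6) = int k + 1"
proof -
  have "real p/6 + 1/2 = real k + 1 + 1/3" using assms by (simp add: field_simps)
  thus ?thesis unfolding nearest_int_def by (simp add: floor_eq_iff)
qed

lemma pmod: fixes p :: nat assumes "prime p" "p \<ge> 5" shows "p mod 6 = 1 \<or> p mod 6 = 5"
proof -
  have "\<not> 2 dvd p"
  proof
    assume "2 dvd p" then have "p = 2" using assms(1) by (metis primes_dvd_imp_eq two_is_prime_nat)
    with assms show False by simp
  qed
  moreover have "\<not> 3 dvd p"
  proof
    assume "3 dvd p" moreover have "prime (3::nat)"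
    proof -
      have "\<forall>n. 2 \<le> n \<and> n < (3::nat) \<longrightarrow> n = 2" by auto
      thus ?thesis unfolding prime_nat_iff' by (metis atLeastLessThan_iff even_numeral odd_numeral one_less_numeral_iff semiring_norm(77))
    qed
    ultimately have "p = 3" using assms(1) by (metis primes_dvd_imp_eq)
    with assms show False by simp
  qed
  ultimately show ?thesis by presburger
qed

theorem lemma2p5:
  fixes p :: nat
  assumes "prime p" and "p \<ge> 5"
  shows
   "(\<forall>n::nat. non_rank ((2*int n+1)*int p + 4*nearest_int (real p/6))) \<and>
    (\<forall>n::nat. n \<ge> 1 \<longrightarrow> non_rank ((2*int n+1)*int p - 4*nearest_int (real p/6))) \<and>
    (p mod 6 = 1 \<longrightarrow>
       (\<forall>n::nat. 3*((2*int n+1)*int p + 4*nearest_int (real p/6)) - 2 = (3*(2*int n+1)+2)*int p - 4 \<and>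
                 3*((2*int n+1)*int p + 4*nearest_int (real p/6)) + 2 = (3*(2*int n+1)+2)*int p) \<and>
       (\<forall>n::nat. n \<ge> 1 \<longrightarrow>
                 3*((2*int n+1)*int p - 4*nearest_int (real p/6)) - 2 = (3*(2*int n+1)-2)*int p \<and>
                 3*((2*int n+1)*int p - 4*nearest_int (real p/6)) + 2 = (3*(2*int n+1)-2)*int p + 4)) \<and>
    (p mod 6 = 5 \<longrightarrow>
       (\<forall>n::nat. 3*((2*int n+1)*int p + 4*nearest_int (real p/6)) - 2 = (3*(2*int n+1)+2)*int p \<and>
                 3*((2*int n+1)*int p + 4*nearest_int (real p/6)) + 2 = (3*(2*int n+1)+2)*int p + 4) \<and>
       (\<forall>n::nat. n \<ge> 1 \<longrightarrow>
                 3*((2*int n+1)*int p - 4*nearest_int (real p/6)) - 2 = (3*(2*int n+1)-2)*int p - 4 \<and>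
                 3*((2*int n+1)*int p - 4*nearest_int (real p/6)) + 2 = (3*(2*int n+1)-2)*int p)) \<and>
    (\<forall>n::nat. composite (3*((2*int n+1)*int p + 4*nearest_int (real p/6)) - 2) \<or>
              composite (3*((2*int n+1)*int p + 4*nearest_int (real p/6)) + 2)) \<and>
    (\<forall>n::nat. n \<ge> 1 \<longrightarrow>
              composite (3*((2*int n+1)*int p - 4*nearest_int (real p/6)) - 2) \<or>
              composite (3*((2*int n+1)*int p - 4*nearest_int (real p/6)) + 2))"
proof -
  let ?N = "nearest_int (real p/6)"
  have p1: "int p > 1" using assms by simp
  have oddp: "odd p" using pmod[OF assms] by presburger
  have nr: "non_rank t" if "odd t" "t \<ge> 3" "composite (3*t-2) \<or> composite (3*t+2)" for t
    using that by (auto simp: non_rank_def composite_def)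
  have cp: "composite ((6*int n+5)*int p)" for n by (rule comp_prod) (use p1 in auto)
  have cm: "n \<ge> 1 \<Longrightarrow> composite ((6*int n+1)*int p)" for n by (rule comp_prod) (use p1 in auto)
  have C: "p mod 6 = 1 \<longrightarrow>
       (\<forall>n::nat. 3*((2*int n+1)*int p + 4*?N) - 2 = (3*(2*int n+1)+2)*int p - 4 \<and>
                 3*((2*int n+1)*int p + 4*?N) + 2 = (3*(2*int n+1)+2)*int p) \<and>
       (\<forall>n::nat. n \<ge> 1 \<longrightarrow>
                 3*((2*int n+1)*int p - 4*?N) - 2 = (3*(2*int n+1)-2)*int p \<and>
                 3*((2*int n+1)*int p - 4*?N) + 2 = (3*(2*int n+1)-2)*int p + 4)"
  proof
    assume h: "p mod 6 = 1"
    define k where "k = p div 6"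
    have pk: "p = 6*k+1" using h k_def by presburger
    have N: "?N = int k" using N1[OF pk] .
    show "(\<forall>n::nat. 3*((2*int n+1)*int p + 4*?N) - 2 = (3*(2*int n+1)+2)*int p - 4 \<and>
                 3*((2*int n+1)*int p + 4*?N) + 2 = (3*(2*int n+1)+2)*int p) \<and>
       (\<forall>n::nat. n \<ge> 1 \<longrightarrow>
                 3*((2*int n+1)*int p - 4*?N) - 2 = (3*(2*int n+1)-2)*int p \<and>
                 3*((2*int n+1)*int p - 4*?N) + 2 = (3*(2*int n+1)-2)*int p + 4)"
      unfolding N unfolding pk by (simp add: algebra_simps)
  qed
  have D: "p mod 6 = 5 \<longrightarrow>
       (\<forall>n::nat. 3*((2*int n+1)*int p + 4*?N) - 2 = (3*(2*int n+1)+2)*int p \<and>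
                 3*((2*int n+1)*int p + 4*?N) + 2 = (3*(2*int n+1)+2)*int p + 4) \<and>
       (\<forall>n::nat. n \<ge> 1 \<longrightarrow>
                 3*((2*int n+1)*int p - 4*?N) - 2 = (3*(2*int n+1)-2)*int p - 4 \<and>
                 3*((2*int n+1)*int p - 4*?N) + 2 = (3*(2*int n+1)-2)*int p)"
  proof
    assume h: "p mod 6 = 5"
    define k where "k = p div 6"
    have pk: "p = 6*k+5" using h k_def by presburger
    have N: "?N = int k + 1" using N5[OF pk] .
    show "(\<forall>n::nat. 3*((2*int n+1)*int p + 4*?N) - 2 = (3*(2*int n+1)+2)*int p \<and>
                 3*((2*int n+1)*int p + 4*?N) + 2 = (3*(2*int n+1)+2)*int p + 4) \<and>
       (\<forall>n::nat. n \<ge> 1 \<longrightarrow>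
                 3*((2*int n+1)*int p - 4*?N) - 2 = (3*(2*int n+1)-2)*int p - 4 \<and>
                 3*((2*int n+1)*int p - 4*?N) + 2 = (3*(2*int n+1)-2)*int p)"
      unfolding N unfolding pk by (simp add: algebra_simps)
  qed
  have A: "\<forall>n::nat. composite (3*((2*int n+1)*int p + 4*?N) - 2) \<or> composite (3*((2*int n+1)*int p + 4*?N) + 2)"
  proof
    fix n :: nat
    have e: "(3*(2*int n+1)+2) = 6*int n+5" by simp
    show "composite (3*((2*int n+1)*int p + 4*?N) - 2) \<or> composite (3*((2*int n+1)*int p + 4*?N) + 2)"
    proof (cases "p mod 6 = 1")
      case True
      then have "3*((2*int n+1)*int p + 4*?N) + 2 = (3*(2*int n+1)+2)*int p" using C by blast
      with cp[of n] e show ?thesis by metis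
    next
      case False
      then have "p mod 6 = 5" using pmod[OF assms] by blast
      then have "3*((2*int n+1)*int p + 4*?N) - 2 = (3*(2*int n+1)+2)*int p" using D by blast
      with cp[of n] e show ?thesis by metis
    qed
  qed
  have B: "\<forall>n::nat. n \<ge> 1 \<longrightarrow> composite (3*((2*int n+1)*int p - 4*?N) - 2) \<or> composite (3*((2*int n+1)*int p - 4*?N) + 2)"
  proof (intro allI impI)
    fix n :: nat assume n: "n \<ge> 1"
    have e: "(3*(2*int n+1)-2) = 6*int n+1" by simp
    show "composite (3*((2*int n+1)*int p - 4*?N) - 2) \<or> composite (3*((2*int n+1)*int p - 4*?N) + 2)"
    proof (cases "p mod 6 = 1")
      case True
      then have "3*((2*int n+1)*int p - 4*?N) - 2 = (3*(2*int n+1)-2)*int p" using C n by blast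
      with cm[OF n] e show ?thesis by metis
    next
      case False
      then have "p mod 6 = 5" using pmod[OF assms] by blast
      then have "3*((2*int n+1)*int p - 4*?N) + 2 = (3*(2*int n+1)-2)*int p" using D n by blast
      with cm[OF n] e show ?thesis by metis
    qed
  qed
  have Nb: "4*?N \<le> int p + 1"
  proof -
    have "real p/6 + 1/2 \<le> real p / 4 + 1/4" using assms(2) by simp
    hence "?N \<le> (real p + 1)/4" unfolding nearest_int_def
      by (smt (verit) of_int_floor_le add_divide_distrib)
    hence "real_of_int (4*?N) \<le> real_of_int (int p + 1)" by simp
    thus ?thesis by (simp only: of_int_le_iff)
  qed
  have F: "\<forall>n::nat. non_rank ((2*int n+1)*int p + 4*?N)"
  proof
    fix n :: nat
    have "?N \<ge> 0" unfolding nearest_int_def by simp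
    moreover have "int p \<le> (2*int n+1)*int p" by (simp add: algebra_simps)
    ultimately have "(2*int n+1)*int p + 4*?N \<ge> 3" using assms(2) by linarith
    moreover have "odd ((2*int n+1)*int p + 4*?N)" using oddp by simp
    ultimately show "non_rank ((2*int n+1)*int p + 4*?N)"
      using A by (intro nr) auto
  qed
  have G: "\<forall>n::nat. n \<ge> 1 \<longrightarrow> non_rank ((2*int n+1)*int p - 4*?N)"
  proof (intro allI impI)
    fix n :: nat assume n: "n \<ge> 1"
    have h3: "3 * int p \<le> (2*int n+1)*int p" using n by (intro mult_right_mono) auto
    show "non_rank ((2*int n+1)*int p - 4*?N)"
    proof (rule nr)
      show "odd ((2*int n+1)*int p - 4*?N)" using oddp by simp
      show "(2*int n+1)*int p - 4*?N \<ge> 3" using h3 Nb assms(2) by linarith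
      show "composite (3*((2*int n+1)*int p - 4*?N) - 2) \<or> composite (3*((2*int n+1)*int p - 4*?N) + 2)"
        using B n by blast
    qed
  qed
  show ?thesis using A B C D F G by blast
qed

end
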